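(* Let $X$ be an algebraic variety, $t\in\mathcal{T}(X)$ and $s\in\mathcal{S}(X)$. Then $t\cdot s\in\mathcal{S}(X)$.
   Context: An affine algebraic variety is a topological space with a sheaf of real-valued functions isomorphic as a ringed space (via a "closed embedding" $i$) to an algebraic set $Y\subset\mathbb{R}^n$ (common zero locus of real polynomials) with its Zariski topology and sheaf of regular functions. An algebraic variety is a topological space with a sheaf of real-valued functions admitting a finite open cover by affine algebraic varieties. For affine $X$: $\mathcal{S}(X)$ is the space of $f$ such that $f\circ i^{-1}$ is the restriction to $i(X)$ of a classical Schwartz function on $\mathbb{R}^n$; $\mathcal{T}(X)$ is the space of $f$ such that $f\circ i^{-1}$ is the restriction of a tempered function on $\mathbb{R}^n$ (a smooth function all of whose partial derivatives are bounded by $C(1+|x|^2)^N$ for some $C,N$); both are independent of $i$. For a general algebraic variety $X$ with a finite affine open cover $X=\bigcup_{i=1}^kX_i$: $\mathcal{S}(X)$ is the set of functions $\sum_{i=1}^k\mathrm{Ext}_{X_i}^X(s_i)$, $s_i\in\mathcal{S}(X_i)$, $\mathrm{Ext}$ = extension by zero (independent of the cover); $\mathcal{T}(X)$ is the set of $t:X\to\mathbb{R}$ with $t|_{X_i}\in\mathcal{T}(X_i)$ for all $i$ (for some, equivalently every, finite affine open cover). *)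

theory Defs
  imports "HOL-Analysis.Analysis"
begin

text \<open>A point of R^n is represented as a function nat => real vanishing at indices >= n.\<close>

definition Rn :: "nat \<Rightarrow> (nat \<Rightarrow> real) set" where
  "Rn n = {x. \<forall>i\<ge>n. x i = 0}"

definition sqnorm :: "nat \<Rightarrow> (nat \<Rightarrow> real) \<Rightarrow> real" where
  "sqnorm n x = (\<Sum>i<n. (x i)\<^sup>2)"

inductive_set polys :: "nat \<Rightarrow> ((nat \<Rightarrow> real) \<Rightarrow> real) set" for n :: nat where
  const: "(\<lambda>x. c) \<in> polys n"
| var: "i < n \<Longrightarrow> (\<lambda>x. x i) \<in> polys n"
| add: "p \<in> polys n \<Longrightarrow> q \<in> polys n \<Longrightarrow> (\<lambda>x. p x + q x) \<in> polys n"
| mult: "p \<in> polys n \<Longrightarrow> q \<in> polys n \<Longrightarrow> (\<lambda>x. p x * q x) \<in> polys n"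

definition algebraic_set :: "nat \<Rightarrow> (nat \<Rightarrow> real) set \<Rightarrow> bool" where
  "algebraic_set n Y \<longleftrightarrow> (\<exists>P \<subseteq> polys n. Y = {x \<in> Rn n. \<forall>p\<in>P. p x = 0})"

definition zariski :: "nat \<Rightarrow> (nat \<Rightarrow> real) set \<Rightarrow> (nat \<Rightarrow> real) topology" where
  "zariski n Y = topology (\<lambda>U. U \<subseteq> Y \<and>
      (\<exists>P \<subseteq> polys n. Y - U = {x \<in> Y. \<forall>p\<in>P. p x = 0}))"

definition regular :: "nat \<Rightarrow> (nat \<Rightarrow> real) set \<Rightarrow> (nat \<Rightarrow> real) set \<Rightarrow> ((nat \<Rightarrow> real) \<Rightarrow> real) set" where
  "regular n Y U = {f. \<forall>x\<in>U. \<exists>V p q. openin (zariski n Y) V \<and> x \<in> V \<and> V \<subseteq> U \<and>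
      p \<in> polys n \<and> q \<in> polys n \<and> (\<forall>y\<in>V. q y \<noteq> 0 \<and> f y = p y / q y)}"

text \<open>A structure is a topology T together with Fs, assigning to each open U
  a set of functions (only their values on U matter).\<close>

definition sheaf_fns :: "'a topology \<Rightarrow> ('a set \<Rightarrow> ('a \<Rightarrow> real) set) \<Rightarrow> bool" where
  "sheaf_fns T Fs \<longleftrightarrow>
     (\<forall>U V f. openin T U \<and> openin T V \<and> V \<subseteq> U \<and> f \<in> Fs U \<longrightarrow> f \<in> Fs V) \<and>
     (\<forall>\<U> f. (\<forall>V\<in>\<U>. openin T V) \<and> (\<forall>V\<in>\<U>. \<exists>g\<in>Fs V. \<forall>x\<in>V. g x = f x)
        \<longrightarrow> (\<exists>g\<in>Fs (\<Union>\<U>). \<forall>x\<in>\<Union>\<U>. g x = f x))"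

definition ringed_iso :: "'a topology \<Rightarrow> ('a set \<Rightarrow> ('a \<Rightarrow> real) set)
     \<Rightarrow> 'b topology \<Rightarrow> ('b set \<Rightarrow> ('b \<Rightarrow> real) set) \<Rightarrow> ('a \<Rightarrow> 'b) \<Rightarrow> bool" where
  "ringed_iso T Fs T' Fs' \<phi> \<longleftrightarrow> homeomorphic_map T T' \<phi> \<and>
     (\<forall>U. openin T U \<longrightarrow> (\<forall>f. (\<exists>g\<in>Fs U. \<forall>x\<in>U. g x = f x) \<longleftrightarrow>
                                  (\<exists>g\<in>Fs' (\<phi> ` U). \<forall>x\<in>U. g (\<phi> x) = f x)))"

definition closed_embedding :: "nat \<Rightarrow> 'a topology \<Rightarrow> ('a set \<Rightarrow> ('a \<Rightarrow> real) set)
     \<Rightarrow> ('a \<Rightarrow> (nat \<Rightarrow> real)) \<Rightarrow> bool" where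
  "closed_embedding n T Fs i \<longleftrightarrow>
     (\<exists>Y. algebraic_set n Y \<and> ringed_iso T Fs (zariski n Y) (regular n Y) i)"

definition affine_variety :: "'a topology \<Rightarrow> ('a set \<Rightarrow> ('a \<Rightarrow> real) set) \<Rightarrow> bool" where
  "affine_variety T Fs \<longleftrightarrow> sheaf_fns T Fs \<and> (\<exists>n i. closed_embedding n T Fs i)"

definition affine_cover :: "'a topology \<Rightarrow> ('a set \<Rightarrow> ('a \<Rightarrow> real) set) \<Rightarrow> 'a set set \<Rightarrow> bool" where
  "affine_cover T Fs \<U> \<longleftrightarrow> finite \<U> \<and> \<Union>\<U> = topspace T \<and>
     (\<forall>U\<in>\<U>. openin T U \<and> affine_variety (subtopology T U) Fs)"

definition algebraic_variety :: "'a topology \<Rightarrow> ('a set \<Rightarrow> ('a \<Rightarrow> real) set) \<Rightarrow> bool" where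
  "algebraic_variety T Fs \<longleftrightarrow> sheaf_fns T Fs \<and> (\<exists>\<U>. affine_cover T Fs \<U>)"

definition pd :: "nat \<Rightarrow> ((nat \<Rightarrow> real) \<Rightarrow> real) \<Rightarrow> (nat \<Rightarrow> real) \<Rightarrow> real" where
  "pd i f x = deriv (\<lambda>h. f (x(i := x i + h))) 0"

fun pds :: "nat list \<Rightarrow> ((nat \<Rightarrow> real) \<Rightarrow> real) \<Rightarrow> (nat \<Rightarrow> real) \<Rightarrow> real" where
  "pds [] f = f"
| "pds (i # is) f = pd i (pds is f)"

definition smooth_Rn :: "nat \<Rightarrow> ((nat \<Rightarrow> real) \<Rightarrow> real) \<Rightarrow> bool" where
  "smooth_Rn n f \<longleftrightarrow> (\<forall>is. set is \<subseteq> {..<n} \<longrightarrow>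
      continuous_on (Rn n) (pds is f) \<and>
      (\<forall>i<n. \<forall>x\<in>Rn n. \<exists>D. ((\<lambda>h. pds is f (x(i := x i + h))) has_real_derivative D) (at 0)))"

definition schwartz_Rn :: "nat \<Rightarrow> ((nat \<Rightarrow> real) \<Rightarrow> real) \<Rightarrow> bool" where
  "schwartz_Rn n f \<longleftrightarrow> smooth_Rn n f \<and>
     (\<forall>is (N::nat). set is \<subseteq> {..<n} \<longrightarrow>
        (\<exists>C. \<forall>x\<in>Rn n. (1 + sqnorm n x) ^ N * \<bar>pds is f x\<bar> \<le> C))"

definition tempered_Rn :: "nat \<Rightarrow> ((nat \<Rightarrow> real) \<Rightarrow> real) \<Rightarrow> bool" where
  "tempered_Rn n f \<longleftrightarrow> smooth_Rn n f \<and>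
     (\<forall>is. set is \<subseteq> {..<n} \<longrightarrow>
        (\<exists>C (N::nat). \<forall>x\<in>Rn n. \<bar>pds is f x\<bar> \<le> C * (1 + sqnorm n x) ^ N))"

definition S_aff :: "'a topology \<Rightarrow> ('a set \<Rightarrow> ('a \<Rightarrow> real) set) \<Rightarrow> ('a \<Rightarrow> real) set" where
  "S_aff T Fs = {f. \<forall>n i. closed_embedding n T Fs i \<longrightarrow>
      (\<exists>F. schwartz_Rn n F \<and> (\<forall>x\<in>topspace T. f x = F (i x)))}"

definition T_aff :: "'a topology \<Rightarrow> ('a set \<Rightarrow> ('a \<Rightarrow> real) set) \<Rightarrow> ('a \<Rightarrow> real) set" where
  "T_aff T Fs = {f. \<forall>n i. closed_embedding n T Fs i \<longrightarrow>
      (\<exists>F. tempered_Rn n F \<and> (\<forall>x\<in>topspace T. f x = F (i x)))}"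

definition schwartz_fns :: "'a topology \<Rightarrow> ('a set \<Rightarrow> ('a \<Rightarrow> real) set) \<Rightarrow> ('a \<Rightarrow> real) set" where
  "schwartz_fns T Fs = {f. \<exists>\<U> s. affine_cover T Fs \<U> \<and>
      (\<forall>U\<in>\<U>. s U \<in> S_aff (subtopology T U) Fs) \<and>
      (\<forall>x\<in>topspace T. f x = (\<Sum>U\<in>\<U>. if x \<in> U then s U x else 0))}"

definition tempered_fns :: "'a topology \<Rightarrow> ('a set \<Rightarrow> ('a \<Rightarrow> real) set) \<Rightarrow> ('a \<Rightarrow> real) set" where
  "tempered_fns T Fs = {f. \<forall>\<U>. affine_cover T Fs \<U> \<longrightarrow>
      (\<forall>U\<in>\<U>. f \<in> T_aff (subtopology T U) Fs)}"

end

theory Submission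
  imports Defs
begin

lemma Rn_upd: "x \<in> Rn n \<Longrightarrow> i < n \<Longrightarrow> x(i := v) \<in> Rn n"
  by (auto simp: Rn_def)

definition PP :: "((nat \<Rightarrow> real) \<Rightarrow> real) \<Rightarrow> ((nat \<Rightarrow> real) \<Rightarrow> real)
   \<Rightarrow> (nat list \<times> nat list) list \<Rightarrow> (nat \<Rightarrow> real) \<Rightarrow> real" where
  "PP G H L y = sum_list (map (\<lambda>(a,b). pds a G y * pds b H y) L)"

definition stp :: "nat \<Rightarrow> (nat list \<times> nat list) list \<Rightarrow> (nat list \<times> nat list) list" where
  "stp i L = concat (map (\<lambda>(a,b). [(i#a,b),(a,i#b)]) L)"

fun LL :: "nat list \<Rightarrow> (nat list \<times> nat list) list" where
  "LL [] = [([],[])]"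
| "LL (i # is) = stp i (LL is)"

lemma PP_Nil[simp]: "PP G H [] y = 0" by (simp add: PP_def)
lemma PP_Cons[simp]: "PP G H ((a,b)#L) y = pds a G y * pds b H y + PP G H L y"
  by (simp add: PP_def)
lemma stp_Nil[simp]: "stp i [] = []" by (simp add: stp_def)
lemma stp_Cons[simp]: "stp i ((a,b)#L) = (i#a,b) # (a,i#b) # stp i L" by (simp add: stp_def)

lemma stp_mem: "(a,b) \<in> set (stp i L) \<Longrightarrow>
   \<exists>a' b'. (a',b') \<in> set L \<and> ((a = i#a' \<and> b = b') \<or> (a = a' \<and> b = i#b'))"
proof (induction L)
  case Nil then show ?case by simp
next
  case (Cons p L)
  obtain a0 b0 where p: "p = (a0,b0)" by force
  show ?case
  proof (cases "(a,b) \<in> set (stp i L)")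
    case True then show ?thesis using Cons.IH by auto
  next
    case False
    then have "(a,b) = (i#a0,b0) \<or> (a,b) = (a0,i#b0)" using Cons.prems p by auto
    then show ?thesis using p by auto
  qed
qed

lemma LL_set: "(a,b) \<in> set (LL is) \<Longrightarrow> set a \<subseteq> set is \<and> set b \<subseteq> set is"
proof (induction "is" arbitrary: a b)
  case Nil then show ?case by simp
next
  case (Cons i js)
  then obtain a' b' where "(a',b') \<in> set (LL js)" "((a = i#a' \<and> b = b') \<or> (a = a' \<and> b = i#b'))"
    using stp_mem by fastforce
  with Cons.IH show ?case by fastforce
qed

lemma smooth_deriv:
  assumes "smooth_Rn n G" "set a \<subseteq> {..<n}" "i < n" "x \<in> Rn n"
  shows "((\<lambda>h. pds a G (x(i := x i + h))) has_real_derivative pds (i#a) G x) (at 0)"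
proof -
  obtain D where D: "((\<lambda>h. pds a G (x(i := x i + h))) has_real_derivative D) (at 0)"
    using assms unfolding smooth_Rn_def by blast
  have "pds (i#a) G x = D" using DERIV_imp_deriv[OF D] by (simp add: pd_def)
  then show ?thesis using D by simp
qed

lemma PP_deriv:
  assumes "smooth_Rn n G" "smooth_Rn n H" "i < n" "x \<in> Rn n"
    and "\<forall>(a,b)\<in>set L. set a \<subseteq> {..<n} \<and> set b \<subseteq> {..<n}"
  shows "((\<lambda>h. PP G H L (x(i := x i + h))) has_real_derivative PP G H (stp i L) x) (at 0)"
  using assms(5)
proof (induction L)
  case Nil then show ?case by simp
next
  case (Cons p L)
  obtain a b where p: "p = (a,b)" by force
  have ha: "set a \<subseteq> {..<n}" and hb: "set b \<subseteq> {..<n}" using Cons.prems p by auto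
  have d1: "((\<lambda>h. pds a G (x(i := x i + h)) * pds b H (x(i := x i + h))) has_real_derivative
     pds (i#a) G x * pds b H x + pds a G x * pds (i#b) H x) (at 0)"
    using DERIV_mult'[OF smooth_deriv[OF assms(1) ha assms(3,4)] smooth_deriv[OF assms(2) hb assms(3,4)]]
    by (simp add: algebra_simps)
  have ih: "((\<lambda>h. PP G H L (x(i := x i + h))) has_real_derivative PP G H (stp i L) x) (at 0)"
    by (rule Cons.IH) (use Cons.prems in auto)
  show ?case using DERIV_add[OF d1 ih] unfolding p PP_Cons stp_Cons by (simp only: add.assoc)
qed

lemma LL_sub: "set is \<subseteq> {..<n} \<Longrightarrow> \<forall>(a,b)\<in>set (LL is). set a \<subseteq> {..<n} \<and> set b \<subseteq> {..<n}"
  using LL_set by blast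

lemma leibniz:
  assumes "smooth_Rn n G" "smooth_Rn n H"
  shows "set is \<subseteq> {..<n} \<Longrightarrow> x \<in> Rn n \<Longrightarrow> pds is (\<lambda>y. G y * H y) x = PP G H (LL is) x"
proof (induction "is" arbitrary: x)
  case Nil then show ?case by (simp add: PP_def)
next
  case (Cons i js)
  have i: "i < n" and js: "set js \<subseteq> {..<n}" using Cons.prems by auto
  have eq: "(\<lambda>h. pds js (\<lambda>y. G y * H y) (x(i := x i + h))) = (\<lambda>h. PP G H (LL js) (x(i := x i + h)))"
    by (intro ext) (rule Cons.IH[OF js Rn_upd[OF Cons.prems(2) i]])
  have "pds (i#js) (\<lambda>y. G y * H y) x = deriv (\<lambda>h. PP G H (LL js) (x(i := x i + h))) 0"
    by (simp add: pd_def eq)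
  also have "\<dots> = PP G H (stp i (LL js)) x"
    by (rule DERIV_imp_deriv[OF PP_deriv[OF assms i Cons.prems(2) LL_sub[OF js]]])
  finally show ?case by simp
qed

lemma PP_cont:
  assumes "smooth_Rn n G" "smooth_Rn n H"
    and "\<forall>(a,b)\<in>set L. set a \<subseteq> {..<n} \<and> set b \<subseteq> {..<n}"
  shows "continuous_on (Rn n) (PP G H L)"
  using assms(3)
proof (induction L)
  case Nil then show ?case by (simp add: PP_def)
next
  case (Cons p L)
  obtain a b where p: "p = (a,b)" by force
  have c1: "continuous_on (Rn n) (pds a G)" "continuous_on (Rn n) (pds b H)"
    using assms(1,2) Cons.prems p unfolding smooth_Rn_def by auto
  have ih: "continuous_on (Rn n) (PP G H L)" by (rule Cons.IH) (use Cons.prems in auto)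
  have "continuous_on (Rn n) (\<lambda>y. pds a G y * pds b H y + PP G H L y)"
    by (intro continuous_on_add continuous_on_mult c1 ih)
  then show ?case using p by simp
qed

lemma smooth_mult:
  assumes "smooth_Rn n G" "smooth_Rn n H"
  shows "smooth_Rn n (\<lambda>y. G y * H y)"
  unfolding smooth_Rn_def
proof (intro allI impI conjI ballI)
  fix "is" assume hs: "set is \<subseteq> {..<n}"
  show "continuous_on (Rn n) (pds is (\<lambda>y. G y * H y))"
    using PP_cont[OF assms LL_sub[OF hs]] leibniz[OF assms hs]
    by (metis (no_types, lifting) continuous_on_cong)
  fix i x assume i: "i < n" and x: "x \<in> Rn n"
  have eq: "(\<lambda>h. pds is (\<lambda>y. G y * H y) (x(i := x i + h))) = (\<lambda>h. PP G H (LL is) (x(i := x i + h)))"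
    by (intro ext) (rule leibniz[OF assms hs Rn_upd[OF x i]])
  show "\<exists>D. ((\<lambda>h. pds is (\<lambda>y. G y * H y) (x(i := x i + h))) has_real_derivative D) (at 0)"
    unfolding eq using PP_deriv[OF assms i x LL_sub[OF hs]] by blast
qed

lemma sqnorm_nonneg: "0 \<le> sqnorm n x"
  unfolding sqnorm_def by (simp add: sum_nonneg)

lemma PP_bound:
  assumes "tempered_Rn n G" "schwartz_Rn n H"
    and "\<forall>(a,b)\<in>set L. set a \<subseteq> {..<n} \<and> set b \<subseteq> {..<n}"
  shows "\<exists>C. \<forall>x\<in>Rn n. (1 + sqnorm n x) ^ N * \<bar>PP G H L x\<bar> \<le> C"
  using assms(3)
proof (induction L)
  case Nil then show ?case by (intro exI[of _ 0]) simp
next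
  case (Cons p L)
  obtain a b where p: "p = (a,b)" by force
  have ha: "set a \<subseteq> {..<n}" and hb: "set b \<subseteq> {..<n}" using Cons.prems p by auto
  obtain C1 where C1: "\<forall>x\<in>Rn n. (1 + sqnorm n x) ^ N * \<bar>PP G H L x\<bar> \<le> C1"
    using Cons.IH Cons.prems by auto
  obtain Ca Na where Ca: "\<forall>x\<in>Rn n. \<bar>pds a G x\<bar> \<le> Ca * (1 + sqnorm n x) ^ Na"
    using assms(1) ha unfolding tempered_Rn_def by blast
  obtain Cb where Cb: "\<forall>x\<in>Rn n. (1 + sqnorm n x) ^ (N + Na) * \<bar>pds b H x\<bar> \<le> Cb"
    using assms(2) hb unfolding schwartz_Rn_def by blast
  show ?case
  proof (intro exI[of _ "\<bar>Ca\<bar> * Cb + C1"] ballI)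
    fix x assume x: "x \<in> Rn n"
    define q where "q = 1 + sqnorm n x"
    have q: "0 \<le> q" using sqnorm_nonneg[of n x] by (simp add: q_def)
    have A0: "\<bar>pds a G x\<bar> \<le> Ca * q ^ Na" using Ca x unfolding q_def by blast
    have "Ca * q ^ Na \<le> \<bar>Ca\<bar> * q ^ Na" by (intro mult_right_mono) (auto simp: q)
    with A0 have A: "\<bar>pds a G x\<bar> \<le> \<bar>Ca\<bar> * q ^ Na" by linarith
    have B: "q ^ (N + Na) * \<bar>pds b H x\<bar> \<le> Cb" using Cb x unfolding q_def by blast
    have C: "q ^ N * \<bar>PP G H L x\<bar> \<le> C1" using C1 x unfolding q_def by blast
    have "q ^ N * \<bar>pds a G x * pds b H x + PP G H L x\<bar>
        \<le> q ^ N * (\<bar>pds a G x\<bar> * \<bar>pds b H x\<bar>) + q ^ N * \<bar>PP G H L x\<bar>"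
      by (metis abs_mult abs_triangle_ineq distrib_left mult_left_mono q zero_le_power)
    also have "q ^ N * (\<bar>pds a G x\<bar> * \<bar>pds b H x\<bar>) \<le> q ^ N * (\<bar>Ca\<bar> * q ^ Na * \<bar>pds b H x\<bar>)"
      by (intro mult_left_mono mult_right_mono A) (auto simp: q)
    also have "\<dots> = \<bar>Ca\<bar> * (q ^ (N + Na) * \<bar>pds b H x\<bar>)"
      by (simp add: power_add algebra_simps)
    also have "\<dots> \<le> \<bar>Ca\<bar> * Cb" by (intro mult_left_mono B) auto
    finally show "(1 + sqnorm n x) ^ N * \<bar>PP G H (p # L) x\<bar> \<le> \<bar>Ca\<bar> * Cb + C1"
      using C p unfolding q_def by simp
  qed
qed

lemma schwartz_mult:
  assumes "tempered_Rn n G" "schwartz_Rn n H"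
  shows "schwartz_Rn n (\<lambda>y. G y * H y)"
proof -
  have sG: "smooth_Rn n G" and sH: "smooth_Rn n H"
    using assms unfolding tempered_Rn_def schwartz_Rn_def by auto
  show ?thesis unfolding schwartz_Rn_def
  proof (intro conjI smooth_mult[OF sG sH] allI impI)
    fix "is" N assume hs: "set is \<subseteq> {..<n}"
    obtain C where C: "\<forall>x\<in>Rn n. (1 + sqnorm n x) ^ N * \<bar>PP G H (LL is) x\<bar> \<le> C"
      using PP_bound[OF assms LL_sub[OF hs]] by blast
    show "\<exists>C. \<forall>x\<in>Rn n. (1 + sqnorm n x) ^ N * \<bar>pds is (\<lambda>y. G y * H y) x\<bar> \<le> C"
      using C leibniz[OF sG sH hs] by auto
  qed
qed

theorem proposition5p6:
  fixes X :: "'a topology" and Fs :: "'a set \<Rightarrow> ('a \<Rightarrow> real) set"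
    and t s :: "'a \<Rightarrow> real"
  assumes "algebraic_variety X Fs"
    and "t \<in> tempered_fns X Fs"
    and "s \<in> schwartz_fns X Fs"
  shows "(\<lambda>x. t x * s x) \<in> schwartz_fns X Fs"
proof -
  obtain \<U> sf where cov: "affine_cover X Fs \<U>"
    and sU: "\<forall>U\<in>\<U>. sf U \<in> S_aff (subtopology X U) Fs"
    and seq: "\<forall>x\<in>topspace X. s x = (\<Sum>U\<in>\<U>. if x \<in> U then sf U x else 0)"
    using assms(3) unfolding schwartz_fns_def by blast
  have tU: "\<forall>U\<in>\<U>. t \<in> T_aff (subtopology X U) Fs"
    using assms(2) cov unfolding tempered_fns_def by blast
  define sf' where "sf' U = (\<lambda>x. t x * sf U x)" for U
  have "\<forall>U\<in>\<U>. sf' U \<in> S_aff (subtopology X U) Fs"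
  proof
    fix U assume U: "U \<in> \<U>"
    show "sf' U \<in> S_aff (subtopology X U) Fs"
      unfolding S_aff_def
    proof (intro CollectI allI impI)
      fix n i assume ce: "closed_embedding n (subtopology X U) Fs i"
      obtain G where G: "tempered_Rn n G" "\<forall>x\<in>topspace (subtopology X U). t x = G (i x)"
        using tU U ce unfolding T_aff_def by blast
      obtain H where H: "schwartz_Rn n H" "\<forall>x\<in>topspace (subtopology X U). sf U x = H (i x)"
        using sU U ce unfolding S_aff_def by blast
      show "\<exists>F. schwartz_Rn n F \<and> (\<forall>x\<in>topspace (subtopology X U). sf' U x = F (i x))"
        using schwartz_mult[OF G(1) H(1)] G(2) H(2) unfolding sf'_def by auto
    qed
  qed
  moreover have "\<forall>x\<in>topspace X. t x * s x = (\<Sum>U\<in>\<U>. if x \<in> U then sf' U x else 0)"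
    using seq unfolding sf'_def by (auto simp: sum_distrib_left intro!: sum.cong)
  ultimately show ?thesis unfolding schwartz_fns_def using cov by blast
qed

end
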